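(* Let $V$ be a topological real vector space and $f:V\to\mathbb{R}$ a non-negative function that is positively homogeneous ($f(\lambda x)=\lambda f(x)$ for all $x\in V$, $\lambda>0$). Then for any real number $\alpha>1$ the following are equivalent: (1) $f$ is continuous and $f^{\alpha}$ is strictly convex. (2) $f$ is continuous and strictly quasi-convex. (3) $f$ is strictly sub-convex and $f^{-1}(0)=\{0\}$.
   Context: Topological real vector spaces are not assumed Hausdorff. A function $g$ on a convex set $C$ is strictly convex if $g((1-t)x+ty)<(1-t)g(x)+tg(y)$ for all distinct $x,y\in C$, $t\in(0,1)$; it is strictly quasi-convex if $g((1-t)x+ty)<\max\{g(x),g(y)\}$ for all distinct $x,y\in C$, $t\in(0,1)$. For $f:C\to\mathbb{R}$ and $r\in\mathbb{R}$, $S_r(f)=\{x\in C: f(x)\le r\}$. For a subset $S$, $\mathrm{Aff}(S)$ is its affine hull; $\mathrm{ri}(S)$ and $\mathrm{rc}(S)$ are the interior and closure of $S$ in the subspace topology of $\mathrm{Aff}(S)$. $]x,y[=\{(1-t)x+ty: t\in[0,1]\}\setminus\{x,y\}$. A subset $C$ is strictly convex if for any two distinct $x,y\in\mathrm{rc}(C)$ one has $]x,y[\subseteq\mathrm{ri}(C)$. A function $f:C\to\mathbb{R}$ is strictly sub-convex if $S_r(f)$ is strictly convex for every $r\in\mathbb{R}$. *)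

theory Defs
  imports "HOL-Analysis.Analysis"
begin

text \<open>A topological real vector space (not assumed Hausdorff): the ambient type carries
 a real vector space structure and a topology for which addition and scalar
 multiplication are jointly continuous (w.r.t. the product topologies).\<close>
definition tvs :: "'a::{real_vector,topological_space} itself \<Rightarrow> bool" where
  "tvs _ \<longleftrightarrow> continuous_on UNIV (\<lambda>p::'a \<times> 'a. fst p + snd p)
            \<and> continuous_on UNIV (\<lambda>p::real \<times> 'a. fst p *\<^sub>R snd p)"

definition strictly_convex_on :: "'a::real_vector set \<Rightarrow> ('a \<Rightarrow> real) \<Rightarrow> bool" where
  "strictly_convex_on C g \<longleftrightarrow> (\<forall>x\<in>C. \<forall>y\<in>C. x \<noteq> y \<longrightarrow> (\<forall>t::real. 0 < t \<and> t < 1 \<longrightarrow>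
      g ((1 - t) *\<^sub>R x + t *\<^sub>R y) < (1 - t) * g x + t * g y))"

definition strictly_quasi_convex_on :: "'a::real_vector set \<Rightarrow> ('a \<Rightarrow> real) \<Rightarrow> bool" where
  "strictly_quasi_convex_on C g \<longleftrightarrow> (\<forall>x\<in>C. \<forall>y\<in>C. x \<noteq> y \<longrightarrow> (\<forall>t::real. 0 < t \<and> t < 1 \<longrightarrow>
      g ((1 - t) *\<^sub>R x + t *\<^sub>R y) < max (g x) (g y)))"

definition sublevel :: "'a set \<Rightarrow> ('a \<Rightarrow> real) \<Rightarrow> real \<Rightarrow> 'a set" where
  "sublevel C f r = {x \<in> C. f x \<le> r}"

definition rel_closure :: "'a::{real_vector,topological_space} set \<Rightarrow> 'a set" where
  "rel_closure S = (top_of_set (affine hull S)) closure_of S"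

definition strictly_convex_set :: "'a::{real_vector,topological_space} set \<Rightarrow> bool" where
  "strictly_convex_set C \<longleftrightarrow> (\<forall>x\<in>rel_closure C. \<forall>y\<in>rel_closure C. x \<noteq> y \<longrightarrow>
      open_segment x y \<subseteq> rel_interior C)"

definition strictly_sub_convex_on :: "'a::{real_vector,topological_space} set \<Rightarrow> ('a \<Rightarrow> real) \<Rightarrow> bool" where
  "strictly_sub_convex_on C f \<longleftrightarrow> (\<forall>r. strictly_convex_set (sublevel C f r))"

end

theory Submission
  imports Defs
begin

lemma powr_tangent_strict:
  fixes m s a :: real
  assumes m: "m > 0" and s: "s \<ge> 0" and sm: "s \<noteq> m" and a: "a > 1"
  shows "s powr a > m powr a + a * m powr (a - 1) * (s - m)"
proof -
  have mm: "m powr (a - 1) * m = m powr a"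
    using m by (simp add: powr_diff)
  define g where "g = (\<lambda>x. x powr a - a * m powr (a - 1) * x)"
  have der: "DERIV g x :> a * x powr (a - 1) - a * m powr (a - 1)" if "x > 0" for x
    unfolding g_def using that
    by (auto intro!: derivative_eq_intros has_real_derivative_powr)
  have "g s > g m"
  proof (cases "s = 0")
    case True
    have "m powr a > 0" using m by simp
    then have "a * m powr a > 1 * m powr a" using a by (intro mult_strict_right_mono) auto
    then have "0 > m powr a - a * (m powr (a - 1) * m)" using mm by simp
    then show ?thesis using True unfolding g_def by (simp add: mult.assoc)
  next
    case False
    then have s0: "s > 0" using s by simp
    show ?thesis
    proof (cases "s > m")
      case True
      have d: "\<And>x. m \<le> x \<Longrightarrow> x \<le> s \<Longrightarrow> DERIV g x :> a * x powr (a - 1) - a * m powr (a - 1)"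
        using der m by simp
      obtain z where z: "m < z" "z < s" "g s - g m = (s - m) * (a * z powr (a - 1) - a * m powr (a - 1))"
        using MVT2[OF True d] by blast
      have "m powr (a - 1) < z powr (a - 1)"
        using z m a by (intro powr_less_mono2) auto
      then have "a * z powr (a - 1) - a * m powr (a - 1) > 0" using a by simp
      then have "(s - m) * (a * z powr (a - 1) - a * m powr (a - 1)) > 0" using True by simp
      then show ?thesis using z by linarith
    next
      case False
      then have lt: "s < m" using sm by simp
      have d: "\<And>x. s \<le> x \<Longrightarrow> x \<le> m \<Longrightarrow> DERIV g x :> a * x powr (a - 1) - a * m powr (a - 1)"
        using der s0 by simp
      obtain z where z: "s < z" "z < m" "g m - g s = (m - s) * (a * z powr (a - 1) - a * m powr (a - 1))"
        using MVT2[OF lt d] by blast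
      have "z powr (a - 1) < m powr (a - 1)"
        using z s0 a by (intro powr_less_mono2) auto
      then have "a * z powr (a - 1) - a * m powr (a - 1) < 0" using a by simp
      then have "(m - s) * (a * z powr (a - 1) - a * m powr (a - 1)) < 0" using lt by (simp add: mult_pos_neg)
      then show ?thesis using z by linarith
    qed
  qed
  then show ?thesis unfolding g_def using mm by (simp add: algebra_simps)
qed

lemma powr_strict_convex:
  fixes p q t a :: real
  assumes "p \<ge> 0" "q \<ge> 0" "p \<noteq> q" "0 < t" "t < 1" "a > 1"
  shows "((1 - t) * p + t * q) powr a < (1 - t) * p powr a + t * q powr a"
proof -
  define m where "m = (1 - t) * p + t * q"
  have m0: "m > 0" using assms unfolding m_def
    by (smt (verit) mult_nonneg_nonneg mult_pos_pos)
  have e1: "p - m = t * (p - q)" unfolding m_def by (simp add: algebra_simps)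
  have e2: "q - m = (1 - t) * (q - p)" unfolding m_def by (simp add: algebra_simps)
  have pm: "p \<noteq> m" using e1 assms by auto
  have qm: "q \<noteq> m" using e2 assms by auto
  define c where "c = a * m powr (a - 1)"
  have 1: "p powr a > m powr a + c * (p - m)"
    using powr_tangent_strict[OF m0 assms(1) pm assms(6)] c_def by simp
  have 2: "q powr a > m powr a + c * (q - m)"
    using powr_tangent_strict[OF m0 assms(2) qm assms(6)] c_def by simp
  have "(1 - t) * p powr a + t * q powr a > (1 - t) * (m powr a + c * (p - m)) + t * (m powr a + c * (q - m))"
    using 1 2 assms by (intro add_strict_mono mult_strict_left_mono) auto
  also have "(1 - t) * (m powr a + c * (p - m)) + t * (m powr a + c * (q - m)) = m powr a"
    unfolding m_def by (simp add: algebra_simps)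
  finally show ?thesis unfolding m_def .
qed


lemma hom_zero:
  fixes f :: "'a::real_vector \<Rightarrow> real"
  assumes hom: "\<forall>x. \<forall>c::real. c > 0 \<longrightarrow> f (c *\<^sub>R x) = c * f x"
  shows "f 0 = 0"
proof -
  have "f ((2::real) *\<^sub>R 0) = 2 * f 0" using hom[rule_format, of 2 0] by simp
  then have "f 0 = 2 * f 0" by simp
  then show ?thesis by linarith
qed

lemma sqc_zero:
  fixes f :: "'a::real_vector \<Rightarrow> real"
  assumes hom: "\<forall>x. \<forall>c::real. c > 0 \<longrightarrow> f (c *\<^sub>R x) = c * f x"
    and sqc: "strictly_quasi_convex_on UNIV f"
    and fx: "f x = 0"
  shows "x = 0"
proof (rule ccontr)
  assume "x \<noteq> 0"
  then have "f ((1 - 1/2) *\<^sub>R 0 + (1/2::real) *\<^sub>R x) < max (f 0) (f x)"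
    using sqc[unfolded strictly_quasi_convex_on_def, rule_format, of 0 x "1/2"] by simp
  moreover have "f ((1 - 1/2) *\<^sub>R 0 + (1/2::real) *\<^sub>R x) = 0"
    using hom fx by simp
  ultimately show False using hom_zero[OF hom] fx by simp
qed

lemma gauge_convex:
  fixes f :: "'a::real_vector \<Rightarrow> real"
  assumes hom: "\<forall>x. \<forall>c::real. c > 0 \<longrightarrow> f (c *\<^sub>R x) = c * f x"
    and nn: "\<forall>x. 0 \<le> f x"
    and sqc: "strictly_quasi_convex_on UNIV f"
    and t: "0 < t" "t < 1"
  shows "f ((1 - t) *\<^sub>R x + t *\<^sub>R y) \<le> (1 - t) * f x + t * f y"
proof -
  have f0: "f 0 = 0" using hom_zero[OF hom] .
  have zero: "\<And>v. f v = 0 \<Longrightarrow> v = 0" using sqc_zero[OF hom sqc] .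
  show ?thesis
  proof (cases "x = 0")
    case True
    then show ?thesis using hom t f0 by simp
  next
    case xn: False
    show ?thesis
    proof (cases "y = 0")
      case True
      then show ?thesis using hom t f0 by simp
    next
      case yn: False
      define p where "p = f x"
      define q where "q = f y"
      have p: "p > 0" using nn zero xn unfolding p_def by (metis less_eq_real_def)
      have q: "q > 0" using nn zero yn unfolding q_def by (metis less_eq_real_def)
      define a where "a = (1 - t) * p"
      define b where "b = t * q"
      define s where "s = a + b"
      have a: "a > 0" using p t unfolding a_def by simp
      have b: "b > 0" using q t unfolding b_def by simp
      have s: "s > 0" using a b unfolding s_def by simp
      define lam where "lam = b / s"
      have lam: "0 < lam" "lam < 1" using a b s unfolding lam_def s_def by auto
      define x' where "x' = (1/p) *\<^sub>R x"
      define y' where "y' = (1/q) *\<^sub>R y"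
      have fx': "f x' = 1" using hom p unfolding x'_def p_def by simp
      have fy': "f y' = 1" using hom q unfolding y'_def q_def by simp
      define w where "w = (1 - lam) *\<^sub>R x' + lam *\<^sub>R y'"
      have "s * (1 - lam) = a"
        using s unfolding lam_def s_def by (simp add: field_simps)
      then have c1: "s * (1 - lam) * (1/p) = 1 - t"
        using p unfolding a_def by simp
      have "s * lam = b"
        using s unfolding lam_def by simp
      then have c2: "s * lam * (1/q) = t"
        using q unfolding b_def by simp
      have "s *\<^sub>R w = (s * (1 - lam) * (1/p)) *\<^sub>R x + (s * lam * (1/q)) *\<^sub>R y"
        unfolding w_def x'_def y'_def by (simp add: scaleR_add_right)
      then have zw: "(1 - t) *\<^sub>R x + t *\<^sub>R y = s *\<^sub>R w" using c1 c2 by simp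
      have fw: "f w \<le> 1"
      proof (cases "x' = y'")
        case True
        then have "w = x'" unfolding w_def by (simp add: scaleR_left_distrib[symmetric])
        then show ?thesis using fx' by simp
      next
        case False
        then have "f w < max (f x') (f y')"
          using sqc lam unfolding strictly_quasi_convex_on_def w_def by blast
        then show ?thesis using fx' fy' by simp
      qed
      have "f ((1 - t) *\<^sub>R x + t *\<^sub>R y) = s * f w" using zw hom s by simp
      also have "\<dots> \<le> s" using fw s by simp
      finally show ?thesis unfolding s_def a_def b_def p_def q_def .
    qed
  qed
qed

lemma sublevel_UNIV: "sublevel UNIV f r = {x. f x \<le> r}"
  by (simp add: sublevel_def)

lemma hull_sublevel:
  fixes f :: "'a::real_vector \<Rightarrow> real"
  assumes hom: "\<forall>x. \<forall>c::real. c > 0 \<longrightarrow> f (c *\<^sub>R x) = c * f x"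
    and nn: "\<forall>x. 0 \<le> f x"
    and zero: "\<And>v. f v = 0 \<Longrightarrow> v = 0"
    and r: "r > 0"
  shows "affine hull (sublevel UNIV f r) = UNIV"
proof -
  have f0: "f 0 = 0" using hom_zero[OF hom] .
  have "v \<in> affine hull (sublevel UNIV f r)" for v
  proof (cases "v = 0")
    case True
    then show ?thesis using f0 r by (intro hull_inc) (simp add: sublevel_UNIV)
  next
    case False
    then have fv: "f v > 0" using nn zero by (metis less_eq_real_def)
    define w where "w = (r / f v) *\<^sub>R v"
    have "f w = r" using hom fv r unfolding w_def by simp
    then have w: "w \<in> affine hull (sublevel UNIV f r)" by (intro hull_inc) (simp add: sublevel_UNIV)
    have z: "0 \<in> affine hull (sublevel UNIV f r)" using f0 r by (intro hull_inc) (simp add: sublevel_UNIV)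
    have "(1 - f v / r) *\<^sub>R 0 + (f v / r) *\<^sub>R w \<in> affine hull (sublevel UNIV f r)"
      by (rule mem_affine[OF affine_affine_hull z w]) simp
    moreover have "(1 - f v / r) *\<^sub>R 0 + (f v / r) *\<^sub>R w = v"
      unfolding w_def using fv r by simp
    ultimately show ?thesis by simp
  qed
  then show ?thesis by auto
qed

lemma rel_interior_UNIV_hull:
  assumes "affine hull S = UNIV"
  shows "rel_interior S = interior S"
  using assms unfolding rel_interior interior_def by auto

lemma rel_closure_UNIV_hull:
  assumes "affine hull S = UNIV"
  shows "rel_closure S = closure S"
  using assms unfolding rel_closure_def by simp

lemma rel_closure_sub_hull: "rel_closure S \<subseteq> affine hull S"
  unfolding rel_closure_def using closure_of_subset_topspace by fastforce

lemma sub_rel_closure: "S \<subseteq> rel_closure S"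
  unfolding rel_closure_def by (rule closure_of_subset) (simp add: hull_subset)


lemma one_to_two:
  fixes f :: "'a::real_vector \<Rightarrow> real" and \<alpha> :: real
  assumes nn: "\<forall>x. 0 \<le> f x" and a: "\<alpha> > 1"
    and sc: "strictly_convex_on UNIV (\<lambda>x. f x powr \<alpha>)"
  shows "strictly_quasi_convex_on UNIV f"
  unfolding strictly_quasi_convex_on_def
proof (intro ballI impI allI)
  fix x y :: 'a and t :: real
  assume xy: "x \<noteq> y" and t: "0 < t \<and> t < 1"
  define z where "z = (1 - t) *\<^sub>R x + t *\<^sub>R y"
  define M where "M = max (f x) (f y)"
  have 1: "f z powr \<alpha> < (1 - t) * f x powr \<alpha> + t * f y powr \<alpha>"
    using sc xy t unfolding strictly_convex_on_def z_def by blast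
  have "f x powr \<alpha> \<le> M powr \<alpha>" using nn a unfolding M_def by (intro powr_mono2) auto
  moreover have "f y powr \<alpha> \<le> M powr \<alpha>" using nn a unfolding M_def by (intro powr_mono2) auto
  ultimately have "(1 - t) * f x powr \<alpha> + t * f y powr \<alpha> \<le> (1 - t) * M powr \<alpha> + t * M powr \<alpha>"
    using t by (intro add_mono mult_left_mono) auto
  with 1 have 2: "f z powr \<alpha> < M powr \<alpha>" by (simp add: algebra_simps)
  show "f z < max (f x) (f y)"
  proof (rule ccontr)
    assume "\<not> f z < max (f x) (f y)"
    moreover have "0 \<le> M" using nn unfolding M_def by (simp add: le_max_iff_disj)
    ultimately have "M powr \<alpha> \<le> f z powr \<alpha>" using a unfolding M_def by (intro powr_mono2) auto
    with 2 show False by simp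
  qed
qed

lemma two_to_one:
  fixes f :: "'a::real_vector \<Rightarrow> real" and \<alpha> :: real
  assumes hom: "\<forall>x. \<forall>c::real. c > 0 \<longrightarrow> f (c *\<^sub>R x) = c * f x"
    and nn: "\<forall>x. 0 \<le> f x" and a: "\<alpha> > 1"
    and sqc: "strictly_quasi_convex_on UNIV f"
  shows "strictly_convex_on UNIV (\<lambda>x. f x powr \<alpha>)"
  unfolding strictly_convex_on_def
proof (intro ballI impI allI)
  fix x y :: 'a and t :: real
  assume xy: "x \<noteq> y" and t: "0 < t \<and> t < 1"
  define z where "z = (1 - t) *\<^sub>R x + t *\<^sub>R y"
  have cv: "f z \<le> (1 - t) * f x + t * f y"
    using gauge_convex[OF hom nn sqc] t unfolding z_def by blast
  show "f z powr \<alpha> < (1 - t) * f x powr \<alpha> + t * f y powr \<alpha>"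
  proof (cases "f x = f y")
    case True
    have "f z < max (f x) (f y)"
      using sqc xy t unfolding strictly_quasi_convex_on_def z_def by blast
    then have "f z < f x" using True by simp
    then have "f z powr \<alpha> < f x powr \<alpha>" using nn a by (intro powr_less_mono2) auto
    then show ?thesis using True by (simp add: algebra_simps)
  next
    case False
    have "f z powr \<alpha> \<le> ((1 - t) * f x + t * f y) powr \<alpha>"
      using cv nn a by (intro powr_mono2) auto
    also have "\<dots> < (1 - t) * f x powr \<alpha> + t * f y powr \<alpha>"
      using powr_strict_convex[of "f x" "f y" t \<alpha>] nn False t a by auto
    finally show ?thesis .
  qed
qed


lemma two_to_three:
  fixes f :: "'a::{real_vector,topological_space} \<Rightarrow> real"
  assumes hom: "\<forall>x. \<forall>c::real. c > 0 \<longrightarrow> f (c *\<^sub>R x) = c * f x"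
    and nn: "\<forall>x. 0 \<le> f x"
    and cont: "continuous_on UNIV f"
    and sqc: "strictly_quasi_convex_on UNIV f"
  shows "strictly_sub_convex_on UNIV f \<and> f -` {0} = {0}"
proof
  have f0: "f 0 = 0" using hom_zero[OF hom] .
  have zero: "\<And>v. f v = 0 \<Longrightarrow> v = 0" using sqc_zero[OF hom sqc] .
  show "f -` {0} = {0}" using f0 zero by auto
  show "strictly_sub_convex_on UNIV f"
    unfolding strictly_sub_convex_on_def strictly_convex_set_def
  proof (intro allI ballI impI)
    fix r x y
    assume x: "x \<in> rel_closure (sublevel UNIV f r)" and y: "y \<in> rel_closure (sublevel UNIV f r)"
      and xy: "x \<noteq> y"
    show "open_segment x y \<subseteq> rel_interior (sublevel UNIV f r)"
    proof (cases "r > 0")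
      case False
      have "sublevel UNIV f r \<subseteq> {0}" using False nn zero
        by (auto simp: sublevel_UNIV) (metis antisym not_less order.trans)
      then have "affine hull (sublevel UNIV f r) \<subseteq> {0}"
        by (intro hull_minimal) (auto simp: affine_sing)
      then have False using x y xy rel_closure_sub_hull by blast
      then show ?thesis ..
    next
      case True
      have H: "affine hull (sublevel UNIV f r) = UNIV"
        using hull_sublevel[OF hom nn zero True] .
      have cl: "closed (sublevel UNIV f r)"
        unfolding sublevel_UNIV by (intro closed_Collect_le cont continuous_on_const)
      have xs: "f x \<le> r" and ys: "f y \<le> r"
        using x y cl unfolding rel_closure_UNIV_hull[OF H] closure_closed[OF cl]
        by (auto simp: sublevel_UNIV)
      show ?thesis
      proof
        fix z assume "z \<in> open_segment x y"
        then obtain u where u: "0 < u" "u < 1" "z = (1 - u) *\<^sub>R x + u *\<^sub>R y"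
          by (auto simp: in_segment)
        have "f z < max (f x) (f y)"
          using sqc xy u unfolding strictly_quasi_convex_on_def by blast
        then have "f z < r" using xs ys by simp
        moreover have "open {v. f v < r}"
          by (intro open_Collect_less cont continuous_on_const)
        ultimately have "z \<in> interior (sublevel UNIV f r)"
          by (intro interiorI[of "{v. f v < r}"]) (auto simp: sublevel_UNIV)
        then show "z \<in> rel_interior (sublevel UNIV f r)"
          using rel_interior_UNIV_hull[OF H] by simp
      qed
    qed
  qed
qed


lemma three_to_two:
  fixes f :: "'a::{real_vector,topological_space} \<Rightarrow> real"
  assumes tvs: "tvs TYPE('a)"
    and hom: "\<forall>x. \<forall>c::real. c > 0 \<longrightarrow> f (c *\<^sub>R x) = c * f x"
    and nn: "\<forall>x. 0 \<le> f x"
    and ssc: "strictly_sub_convex_on UNIV f"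
    and zer: "f -` {0} = {0}"
  shows "continuous_on UNIV f \<and> strictly_quasi_convex_on UNIV f"
proof -
  have f0: "f 0 = 0" using hom_zero[OF hom] .
  have zero: "\<And>v. f v = 0 \<Longrightarrow> v = 0" using zer by auto
  have pos: "\<And>v. v \<noteq> 0 \<Longrightarrow> f v > 0" using nn zero by (metis less_eq_real_def)
  have H: "\<And>r. r > 0 \<Longrightarrow> affine hull (sublevel UNIV f r) = UNIV"
    using hull_sublevel[OF hom nn zero] by blast
  have key: "z \<in> interior (sublevel UNIV f r)"
    if r: "r > 0" and x: "f x \<le> r" and y: "f y \<le> r" and xy: "x \<noteq> y"
      and z: "z \<in> open_segment x y" for r x y z
  proof -
    have "x \<in> rel_closure (sublevel UNIV f r)" "y \<in> rel_closure (sublevel UNIV f r)"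
      using x y subsetD[OF sub_rel_closure[of "sublevel UNIV f r"]] by (auto simp: sublevel_UNIV)
    then have "open_segment x y \<subseteq> rel_interior (sublevel UNIV f r)"
      using ssc xy unfolding strictly_sub_convex_on_def strictly_convex_set_def by blast
    then show ?thesis using z rel_interior_UNIV_hull[OF H[OF r]] by auto
  qed
  have closed: "closed (sublevel UNIV f r)" if r: "r > 0" for r
  proof -
    have "closure (sublevel UNIV f r) \<subseteq> sublevel UNIV f r"
    proof
      fix x assume x: "x \<in> closure (sublevel UNIV f r)"
      show "x \<in> sublevel UNIV f r"
      proof (cases "x = 0")
        case True then show ?thesis using f0 r by (simp add: sublevel_UNIV)
      next
        case False
        have x': "x \<in> rel_closure (sublevel UNIV f r)" using x rel_closure_UNIV_hull[OF H[OF r]] by simp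
        have "0 \<in> rel_closure (sublevel UNIV f r)" using subsetD[OF sub_rel_closure[of "sublevel UNIV f r"]] f0 r by (auto simp: sublevel_UNIV)
        then have seg: "open_segment 0 x \<subseteq> rel_interior (sublevel UNIV f r)"
          using ssc x' False unfolding strictly_sub_convex_on_def strictly_convex_set_def by metis
        have "f x \<le> r"
        proof (rule ccontr)
          assume "\<not> f x \<le> r"
          then have fx: "f x > r" by simp
          define u where "u = (1 + r / f x) / 2"
          have u: "0 < u" "u < 1" using fx r unfolding u_def by (auto simp: field_simps)
          have "u *\<^sub>R x \<in> open_segment 0 x"
            using u False unfolding in_segment by (intro conjI exI[of _ u]) auto
          then have "u *\<^sub>R x \<in> sublevel UNIV f r" using seg rel_interior_subset by blast
          then have "u * f x \<le> r" using hom u by (simp add: sublevel_UNIV)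
          moreover have "u * f x = (f x + r) / 2" using fx r unfolding u_def by (simp add: field_simps)
          ultimately show False using fx by simp
        qed
        then show ?thesis by (simp add: sublevel_UNIV)
      qed
    qed
    then show ?thesis using closure_subset_eq by blast
  qed
  have intA: "z \<in> interior (sublevel UNIV f s)" if s: "s > 0" and fz: "f z < s" for s z
  proof (cases "z = 0")
    case False
    then have fz0: "f z > 0" using pos by blast
    define w where "w = (s / f z) *\<^sub>R z"
    have fw: "f w = s" using hom fz0 s unfolding w_def by simp
    have wz: "w \<noteq> 0" using fw s f0 by auto
    have "z \<in> open_segment 0 w"
      unfolding in_segment
    proof (intro conjI exI[of _ "f z / s"])
      show "0 \<noteq> w" using wz by simp
      show "0 < f z / s" using fz0 s by simp
      show "f z / s < 1" using fz s by simp
      show "z = (1 - f z / s) *\<^sub>R 0 + (f z / s) *\<^sub>R w" using fz0 s unfolding w_def by simp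
    qed
    then show ?thesis using key[OF s _ _ wz[symmetric]] f0 fw s by simp
  next
    case True
    show ?thesis
    proof (cases "\<exists>v::'a. v \<noteq> 0")
      case False
      then have "\<And>x::'a. x = 0" by blast
      then have "sublevel UNIV f s = UNIV" using f0 s by (auto simp: sublevel_UNIV) (metis less_eq_real_def)
      then show ?thesis by simp
    next
      case True
      then obtain v :: 'a where v: "v \<noteq> 0" by blast
      have fv: "f v > 0" and fmv: "f (- v) > 0" using pos v by auto
      define a where "a = s / f v"
      define b where "b = s / f (- v)"
      have a: "a > 0" and b: "b > 0" using fv fmv s unfolding a_def b_def by auto
      define w1 where "w1 = a *\<^sub>R v"
      define w2 where "w2 = b *\<^sub>R (- v)"
      have f1: "f w1 = s" using hom fv s unfolding w1_def a_def by simp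
      have f2: "f w2 = s" using hom[rule_format, of b "- v"] fmv s b unfolding w2_def b_def by simp
      have ne: "w1 \<noteq> w2"
      proof
        assume "w1 = w2"
        then have "(a + b) *\<^sub>R v = 0" unfolding w1_def w2_def by (simp add: scaleR_left_distrib)
        then show False using a b v by simp
      qed
      have "0 \<in> open_segment w1 w2"
        unfolding in_segment
      proof (intro conjI exI[of _ "a / (a + b)"])
        show "w1 \<noteq> w2" by (rule ne)
        show "0 < a / (a + b)" using a b by simp
        show "a / (a + b) < 1" using a b by simp
        have "(1 - a / (a + b)) = b / (a + b)" using a b by (simp add: field_simps)
        then have "(1 - a / (a + b)) *\<^sub>R w1 + (a / (a + b)) *\<^sub>R w2 = (b * a / (a + b)) *\<^sub>R v - (a * b / (a + b)) *\<^sub>R v"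
          unfolding w1_def w2_def by simp
        then show "(0::'a) = (1 - a / (a + b)) *\<^sub>R w1 + (a / (a + b)) *\<^sub>R w2"
          by (simp add: mult.commute)
      qed
      then show ?thesis using key[OF s _ _ ne] f1 f2 \<open>z = 0\<close> by simp
    qed
  qed
  have cont: "continuous_on UNIV f"
    unfolding continuous_on_def
  proof (intro ballI)
    fix z :: 'a
    show "(f \<longlongrightarrow> f z) (at z within UNIV)"
      unfolding order_tendsto_iff
    proof (intro conjI allI impI)
      fix l assume l: "l < f z"
      show "\<forall>\<^sub>F x in at z within UNIV. l < f x"
      proof (cases "f z > 0")
        case False
        then have "l < 0" using l nn by (metis less_le_trans not_less)
        then show ?thesis using nn by (simp add: less_le_trans)
      next
        case True
        define r where "r = max l (f z / 2)"
        have r: "r > 0" "r < f z" "l \<le> r" using True l unfolding r_def by auto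
        have "open (- sublevel UNIV f r)" using closed[OF r(1)] by (simp add: open_Compl)
        moreover have "z \<in> - sublevel UNIV f r" using r by (simp add: sublevel_UNIV)
        ultimately show ?thesis unfolding eventually_at_topological
          using r by (intro exI[of _ "- sublevel UNIV f r"]) (auto simp: sublevel_UNIV)
      qed
    next
      fix u assume u: "f z < u"
      define s where "s = (f z + u) / 2"
      have s: "s > 0" "f z < s" "s < u" using u nn[rule_format, of z] unfolding s_def by auto
      have "z \<in> interior (sublevel UNIV f s)" using intA s by blast
      then show "\<forall>\<^sub>F x in at z within UNIV. f x < u"
        unfolding eventually_at_topological
        using s interior_subset[of "sublevel UNIV f s"]
        by (intro exI[of _ "interior (sublevel UNIV f s)"]) (auto simp: sublevel_UNIV)
    qed
  qed
  have sm: "continuous_on UNIV (\<lambda>c::real. c *\<^sub>R z)" for z :: 'a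
  proof -
    have "continuous_on UNIV (\<lambda>p::real \<times> 'a. fst p *\<^sub>R snd p)" using tvs unfolding tvs_def by blast
    then have "continuous_on UNIV ((\<lambda>p::real \<times> 'a. fst p *\<^sub>R snd p) \<circ> (\<lambda>c. (c, z)))"
      by (intro continuous_on_compose continuous_intros) (auto intro: continuous_on_subset)
    then show ?thesis by (simp add: o_def)
  qed
  have sqc: "strictly_quasi_convex_on UNIV f"
    unfolding strictly_quasi_convex_on_def
  proof (intro ballI impI allI)
    fix x y :: 'a and t :: real
    assume xy: "x \<noteq> y" and t: "0 < t \<and> t < 1"
    define z where "z = (1 - t) *\<^sub>R x + t *\<^sub>R y"
    define M where "M = max (f x) (f y)"
    have M: "M > 0"
    proof (rule ccontr)
      assume "\<not> M > 0"
      then have "f x = 0" "f y = 0" using nn[rule_format, of x] nn[rule_format, of y] unfolding M_def by (auto simp: max_def split: if_splits)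
      then show False using zero xy by metis
    qed
    have "z \<in> open_segment x y" unfolding in_segment z_def using xy t by blast
    then have zi: "z \<in> interior (sublevel UNIV f M)" using key[OF M _ _ xy] unfolding M_def by simp
    then have fzM: "f z \<le> M" using interior_subset by (force simp: sublevel_UNIV)
    obtain U where U: "open U" "z \<in> U" "U \<subseteq> sublevel UNIV f M" using zi by (meson interiorE)
    have "open ((\<lambda>c::real. c *\<^sub>R z) -` U)" by (intro open_vimage U sm)
    moreover have "1 \<in> (\<lambda>c::real. c *\<^sub>R z) -` U" using U by simp
    ultimately obtain e where e: "e > 0" "\<And>c. dist c 1 < e \<Longrightarrow> c \<in> (\<lambda>c::real. c *\<^sub>R z) -` U"
      unfolding open_dist by blast
    have "dist (1 + e/2) 1 < e" using e by (simp add: dist_real_def)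
    then have "(1 + e/2) *\<^sub>R z \<in> U" using e by blast
    then have "(1 + e/2) * f z \<le> M" using U hom e by (auto simp: sublevel_UNIV)
    then have "f z \<noteq> M" using M e by (auto simp: field_simps) (meson mult_pos_pos not_less)
    then show "f ((1 - t) *\<^sub>R x + t *\<^sub>R y) < max (f x) (f y)" using fzM unfolding z_def M_def by simp
  qed
  show ?thesis using cont sqc by blast
qed


theorem mainTheorem3:
  fixes f :: "'a::{real_vector,topological_space} \<Rightarrow> real" and \<alpha> :: real
  assumes "tvs TYPE('a)"
    and "\<forall>x. 0 \<le> f x"
    and "\<forall>x. \<forall>c::real. c > 0 \<longrightarrow> f (c *\<^sub>R x) = c * f x"
    and "\<alpha> > 1"
  shows "((continuous_on UNIV f \<and> strictly_convex_on UNIV (\<lambda>x. f x powr \<alpha>))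
            \<longleftrightarrow> (continuous_on UNIV f \<and> strictly_quasi_convex_on UNIV f))
       \<and> ((continuous_on UNIV f \<and> strictly_quasi_convex_on UNIV f)
            \<longleftrightarrow> (strictly_sub_convex_on UNIV f \<and> f -` {0} = {0}))"
  using one_to_two[OF assms(2) assms(4)] two_to_one[OF assms(3) assms(2) assms(4)]
    two_to_three[OF assms(3) assms(2)] three_to_two[OF assms(1) assms(3) assms(2)]
  by blast

end
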